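(* Let $P=\{p_1,\dots,p_d\}$ be a maximal ranked poset of rank $n$, with rank levels $P_0,\dots,P_n$. (a) Let $I$ and $J$ be poset ideals of $P$ with $I\neq J$. Then $\{I,J\}\in E^{*}_{\mathcal O(P)}$ if and only if $I=\emptyset$, $J$ is connected in $P$, and $|\max(J)|\ge 2$. (b) Let $A$ and $B$ be antichains of $P$ with $A\neq B$. Then $\{A,B\}\in E^{*}_{\mathcal C(P)}$ if and only if there exists some $\ell$ with $1\le \ell\le n$ such that $A=P_{\ell-1}$, $B\subset P_\ell$, and $|B|\ge 2$.
   Context: For a finite poset $P=\{p_1,\dots,p_d\}$ and $W\subset P$ put $\rho(W)=\sum_{p_i\in W}\mathbf e_i\in\mathbb R^d$ ($\rho(\emptyset)=0$). The order polytope is $\mathcal O(P)=\{x\in\mathbb R^d: 0\le x_i\le 1 \text{ for all } i,\ x_i\ge x_j \text{ if } p_i\le p_j\}$ and the chain polytope is $\mathcal C(P)=\{x\in\mathbb R^d: x_i\ge 0 \text{ for all } i,\ x_{i_1}+\dots+x_{i_k}\le 1 \text{ if } p_{i_1}<\dots<p_{i_k}\}$. Poset ideals and antichains include $\emptyset$. For a poset ideal $I$, $\max(I)$ is its set of maximal elements; for an antichain $A$, $\langle A\rangle=\{x: x\le p \text{ for some } p\in A\}$. A nonempty subset $Q\subset P$ is connected in $P$ if the induced subgraph of the comparability graph of $P$ on $Q$ is connected. $E^{*}_{\mathcal O(P)}$ is the set of pairs $\{I,J\}$ of distinct poset ideals such that $\mathrm{conv}\{\rho(I),\rho(J)\}$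 is an edge of $\mathcal O(P)$ but $\mathrm{conv}\{\rho(\max I),\rho(\max J)\}$ is not an edge of $\mathcal C(P)$. $E^{*}_{\mathcal C(P)}$ is the set of pairs $\{A,B\}$ of distinct antichains such that $\mathrm{conv}\{\rho(A),\rho(B)\}$ is an edge of $\mathcal C(P)$ but $\mathrm{conv}\{\rho(\langle A\rangle),\rho(\langle B\rangle)\}$ is not an edge of $\mathcal O(P)$. The length of a chain $C$ is $|C|-1$; $P$ is graded of rank $n$ if every maximal chain has length $n$, and then $P=\bigcup_{i=0}^n P_i$ where every maximal chain is $p_0<p_1<\dots<p_n$ with $p_i\in P_i$ ($P_i$ = elements of rank $i$). $P$ is a maximal ranked poset if it is graded and any two elements of distinct ranks are comparable. *)

theory Defs
  imports "HOL-Analysis.Analysis"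
begin

text \<open>The poset P is the finite type 'n (so d = CARD('n)) with order relation le;
  vectors in R^d are real^'n, the coordinate of element i being x$i.\<close>

definition poset_order :: "('n \<Rightarrow> 'n \<Rightarrow> bool) \<Rightarrow> bool" where
  "poset_order le \<longleftrightarrow> (\<forall>x. le x x) \<and> (\<forall>x y. le x y \<and> le y x \<longrightarrow> x = y)
      \<and> (\<forall>x y z. le x y \<and> le y z \<longrightarrow> le x z)"

definition rho :: "'n::finite set \<Rightarrow> real ^ 'n" where
  "rho W = (\<chi> i. if i \<in> W then 1 else 0)"

definition is_chain :: "('n \<Rightarrow> 'n \<Rightarrow> bool) \<Rightarrow> 'n set \<Rightarrow> bool" where
  "is_chain le C \<longleftrightarrow> (\<forall>x\<in>C. \<forall>y\<in>C. le x y \<or> le y x)"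

definition is_antichain :: "('n \<Rightarrow> 'n \<Rightarrow> bool) \<Rightarrow> 'n set \<Rightarrow> bool" where
  "is_antichain le A \<longleftrightarrow> (\<forall>x\<in>A. \<forall>y\<in>A. le x y \<longrightarrow> x = y)"

definition is_ideal :: "('n \<Rightarrow> 'n \<Rightarrow> bool) \<Rightarrow> 'n set \<Rightarrow> bool" where
  "is_ideal le I \<longleftrightarrow> (\<forall>x y. y \<in> I \<and> le x y \<longrightarrow> x \<in> I)"

definition order_polytope :: "('n::finite \<Rightarrow> 'n \<Rightarrow> bool) \<Rightarrow> (real ^ 'n) set" where
  "order_polytope le = {x. (\<forall>i. 0 \<le> x $ i \<and> x $ i \<le> 1) \<and> (\<forall>i j. le i j \<longrightarrow> x $ i \<ge> x $ j)}"

definition chain_polytope :: "('n::finite \<Rightarrow> 'n \<Rightarrow> bool) \<Rightarrow> (real ^ 'n) set" where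
  "chain_polytope le = {x. (\<forall>i. 0 \<le> x $ i) \<and> (\<forall>C. is_chain le C \<longrightarrow> (\<Sum>i\<in>C. x $ i) \<le> 1)}"

definition maxs :: "('n \<Rightarrow> 'n \<Rightarrow> bool) \<Rightarrow> 'n set \<Rightarrow> 'n set" where
  "maxs le I = {x \<in> I. \<forall>y\<in>I. le x y \<longrightarrow> y = x}"

definition down :: "('n \<Rightarrow> 'n \<Rightarrow> bool) \<Rightarrow> 'n set \<Rightarrow> 'n set" where
  "down le A = {x. \<exists>p\<in>A. le x p}"

definition is_edge :: "(real ^ 'n) set \<Rightarrow> (real ^ 'n) set \<Rightarrow> bool" where
  "is_edge K e \<longleftrightarrow> e face_of K \<and> aff_dim e = 1"

definition E_star_O :: "('n::finite \<Rightarrow> 'n \<Rightarrow> bool) \<Rightarrow> 'n set \<Rightarrow> 'n set \<Rightarrow> bool" where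
  "E_star_O le I J \<longleftrightarrow> is_ideal le I \<and> is_ideal le J \<and> I \<noteq> J
     \<and> is_edge (order_polytope le) (convex hull {rho I, rho J})
     \<and> \<not> is_edge (chain_polytope le) (convex hull {rho (maxs le I), rho (maxs le J)})"

definition E_star_C :: "('n::finite \<Rightarrow> 'n \<Rightarrow> bool) \<Rightarrow> 'n set \<Rightarrow> 'n set \<Rightarrow> bool" where
  "E_star_C le A B \<longleftrightarrow> is_antichain le A \<and> is_antichain le B \<and> A \<noteq> B
     \<and> is_edge (chain_polytope le) (convex hull {rho A, rho B})
     \<and> \<not> is_edge (order_polytope le) (convex hull {rho (down le A), rho (down le B)})"

definition connected_in :: "('n \<Rightarrow> 'n \<Rightarrow> bool) \<Rightarrow> 'n set \<Rightarrow> bool" where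
  "connected_in le Q \<longleftrightarrow> Q \<noteq> {} \<and>
     (\<forall>x\<in>Q. \<forall>y\<in>Q. (\<lambda>a b. a \<in> Q \<and> b \<in> Q \<and> (le a b \<or> le b a))\<^sup>*\<^sup>* x y)"

definition maximal_chain :: "('n \<Rightarrow> 'n \<Rightarrow> bool) \<Rightarrow> 'n set \<Rightarrow> bool" where
  "maximal_chain le C \<longleftrightarrow> is_chain le C \<and> (\<forall>D. is_chain le D \<and> C \<subseteq> D \<longrightarrow> D = C)"

text \<open>Graded of rank n: every maximal chain has length n (i.e. n+1 elements).\<close>
definition graded :: "('n::finite \<Rightarrow> 'n \<Rightarrow> bool) \<Rightarrow> nat \<Rightarrow> bool" where
  "graded le n \<longleftrightarrow> (\<forall>C. maximal_chain le C \<longrightarrow> card C = n + 1)"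

text \<open>P_i: elements occurring as p_i in a maximal chain p_0 < ... < p_n.\<close>
definition rank_level :: "('n::finite \<Rightarrow> 'n \<Rightarrow> bool) \<Rightarrow> nat \<Rightarrow> 'n set" where
  "rank_level le i = {x. \<exists>C. maximal_chain le C \<and> x \<in> C \<and> card {y\<in>C. le y x \<and> y \<noteq> x} = i}"

definition maximal_ranked :: "('n::finite \<Rightarrow> 'n \<Rightarrow> bool) \<Rightarrow> nat \<Rightarrow> bool" where
  "maximal_ranked le n \<longleftrightarrow> graded le n \<and>
     (\<forall>i j x y. i \<noteq> j \<and> x \<in> rank_level le i \<and> y \<in> rank_level le j \<longrightarrow> le x y \<or> le y x)"

end

theory Submission
  imports Defs
begin


lemma face_tight:
  fixes K :: "(real^'n) set" and L :: "((real^'n \<Rightarrow> real) \<times> real) set"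
  assumes conv: "convex K" and uK: "u \<in> K" and vK: "v \<in> K"
    and valid: "\<And>g c x. (g,c) \<in> L \<Longrightarrow> x \<in> K \<Longrightarrow> g x \<le> c"
    and aff: "\<And>g c a b t. (g,c) \<in> L \<Longrightarrow> g ((1-t) *\<^sub>R a + t *\<^sub>R b) = (1-t) * g a + t * g b"
    and tu: "\<And>g c. (g,c) \<in> L \<Longrightarrow> g u = c"
    and tv: "\<And>g c. (g,c) \<in> L \<Longrightarrow> g v = c"
    and char: "\<And>x. x \<in> K \<Longrightarrow> (\<And>g c. (g,c) \<in> L \<Longrightarrow> g x = c) \<Longrightarrow> x \<in> closed_segment u v"
  shows "closed_segment u v face_of K"
proof -
  have tseg: "g x = c" if gL: "(g,c) \<in> L" and xs: "x \<in> closed_segment u v" for g c x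
  proof -
    obtain t where "x = (1-t) *\<^sub>R u + t *\<^sub>R v" using xs by (auto simp: in_segment)
    then have "g x = (1-t) * g u + t * g v" using aff[OF gL] by simp
    then show ?thesis using tu[OF gL] tv[OF gL] by (simp add: algebra_simps)
  qed
  show ?thesis unfolding face_of_def
  proof (intro conjI ballI impI)
    show "closed_segment u v \<subseteq> K" using conv uK vK by (simp add: closed_segment_subset)
    show "convex (closed_segment u v)" by simp
    fix a b x assume a: "a \<in> K" and b: "b \<in> K" and x: "x \<in> closed_segment u v" and xo: "x \<in> open_segment a b"
    obtain t where t: "0 < t" "t < 1" "x = (1-t) *\<^sub>R a + t *\<^sub>R b" using xo by (auto simp: in_segment)
    have tt: "g a = c \<and> g b = c" if "(g,c) \<in> L" for g c
    proof -
      have e: "(1-t) * g a + t * g b = c" using aff[OF that] tseg[OF that x] t by simp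
      have ga: "g a \<le> c" and gb: "g b \<le> c" using valid[OF that] a b by auto
      have "g a = c"
      proof (rule ccontr)
        assume "g a \<noteq> c" then have "g a < c" using ga by simp
        then have "(1-t) * g a < (1-t) * c" using t by (intro mult_strict_left_mono) auto
        moreover have "t * g b \<le> t * c" using t gb by (intro mult_left_mono) auto
        ultimately show False using e by (simp add: algebra_simps)
      qed
      moreover have "g b = c"
      proof (rule ccontr)
        assume "g b \<noteq> c" then have "g b < c" using gb by simp
        then have "t * g b < t * c" using t by (intro mult_strict_left_mono) auto
        moreover have "(1-t) * g a \<le> (1-t) * c" using t ga by (intro mult_left_mono) auto
        ultimately show False using e by (simp add: algebra_simps)
      qed
      ultimately show ?thesis by simp
    qed
    show "a \<in> closed_segment u v" using char[OF a] tt by blast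
    show "b \<in> closed_segment u v" using char[OF b] tt by blast
  qed
qed

lemma not_face_mid:
  fixes K :: "(real^'n) set"
  assumes f: "closed_segment u v face_of K" and aK: "a \<in> K" and bK: "b \<in> K"
    and s: "a + b = u + v" and na: "a \<notin> closed_segment u v"
  shows False
proof -
  have m: "midpoint a b = midpoint u v" using s by (simp add: midpoint_def)
  have "a \<noteq> b"
  proof
    assume "a = b"
    then have "a = midpoint u v" using m by (simp add: midpoint_def)
    then show False using na by simp
  qed
  then have "midpoint u v \<in> open_segment a b" using m by (metis midpoint_in_open_segment)
  then show False using face_ofD[OF f _ aK bK] na midpoint_in_closed_segment by blast
qed

lemma is_edge_iff:
  "is_edge K (convex hull {u, v}) \<longleftrightarrow> closed_segment u v face_of K \<and> u \<noteq> v"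
  for u v :: "real^'n"
  by (simp add: is_edge_def aff_dim_convex_hull segment_convex_hull)

lemma rho_nth[simp]: "rho W $ i = (if i \<in> W then 1 else 0)"
  by (simp add: rho_def)

lemma rho_inj: "rho A = rho B \<longleftrightarrow> A = B"
  by (auto simp: vec_eq_iff)



lemma convex_order_polytope: "convex (order_polytope le)"
  unfolding convex_def
proof (intro ballI allI impI)
  fix x y :: "real^'a" and u v :: real
  assume xs: "x \<in> order_polytope le" and ys: "y \<in> order_polytope le"
    and uv: "0 \<le> u" "0 \<le> v" "u + v = 1"
  have x: "\<And>i. 0 \<le> x $ i" "\<And>i. x $ i \<le> 1" "\<And>i j. le i j \<Longrightarrow> x $ j \<le> x $ i"
    using xs by (auto simp: order_polytope_def)
  have y: "\<And>i. 0 \<le> y $ i" "\<And>i. y $ i \<le> 1" "\<And>i j. le i j \<Longrightarrow> y $ j \<le> y $ i"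
    using ys by (auto simp: order_polytope_def)
  have a: "0 \<le> u * x $ i + v * y $ i" for i using x y uv by simp
  have b: "u * x $ i + v * y $ i \<le> 1" for i
  proof -
    have "u * x $ i \<le> u * 1" using x uv by (intro mult_left_mono) auto
    moreover have "v * y $ i \<le> v * 1" using y uv by (intro mult_left_mono) auto
    ultimately show ?thesis using uv by simp
  qed
  have c: "u * x $ j + v * y $ j \<le> u * x $ i + v * y $ i" if "le i j" for i j
  proof -
    have "u * x $ j \<le> u * x $ i" "v * y $ j \<le> v * y $ i" using x(3)[OF that] y(3)[OF that] uv
      by (auto intro: mult_left_mono)
    then show ?thesis by simp
  qed
  show "u *\<^sub>R x + v *\<^sub>R y \<in> order_polytope le"
    unfolding order_polytope_def using a b c by simp
qed

lemma convex_chain_polytope: "convex (chain_polytope le)"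
  unfolding convex_def
proof (intro ballI allI impI)
  fix x y :: "real^'a" and u v :: real
  assume xs: "x \<in> chain_polytope le" and ys: "y \<in> chain_polytope le"
    and uv: "0 \<le> u" "0 \<le> v" "u + v = 1"
  have x: "\<And>i. 0 \<le> x $ i" "\<And>C. is_chain le C \<Longrightarrow> (\<Sum>i\<in>C. x $ i) \<le> 1"
    using xs by (auto simp: chain_polytope_def)
  have y: "\<And>i. 0 \<le> y $ i" "\<And>C. is_chain le C \<Longrightarrow> (\<Sum>i\<in>C. y $ i) \<le> 1"
    using ys by (auto simp: chain_polytope_def)
  have a: "0 \<le> u * x $ i + v * y $ i" for i using x y uv by simp
  have b: "(\<Sum>i\<in>C. u * x $ i + v * y $ i) \<le> 1" if C: "is_chain le C" for C
  proof -
    have "(\<Sum>i\<in>C. u * x $ i + v * y $ i) = u * (\<Sum>i\<in>C. x $ i) + v * (\<Sum>i\<in>C. y $ i)"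
      by (simp add: sum.distrib sum_distrib_left)
    also have "\<dots> \<le> u * 1 + v * 1"
      using x(2)[OF C] y(2)[OF C] uv by (intro add_mono mult_left_mono) auto
    finally show ?thesis using uv by simp
  qed
  show "u *\<^sub>R x + v *\<^sub>R y \<in> chain_polytope le"
    unfolding chain_polytope_def using a b by simp
qed


lemma rho_ideal_O: "is_ideal le I \<Longrightarrow> rho I \<in> order_polytope le"
  by (auto simp: order_polytope_def is_ideal_def)

lemma chain_antichain_le1:
  fixes C :: "'n::finite set"
  assumes "is_chain le C" "is_antichain le A"
  shows "card (C \<inter> A) \<le> 1"
proof -
  have "\<forall>x\<in>C \<inter> A. \<forall>y\<in>C \<inter> A. x = y" using assms unfolding is_chain_def is_antichain_def by blast
  then show ?thesis using card_le_Suc0_iff_eq[of "C \<inter> A"] by simp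
qed

lemma rho_antichain_C:
  fixes A :: "'n::finite set"
  assumes "is_antichain le A" shows "rho A \<in> chain_polytope le"
proof -
  have "(\<Sum>i\<in>C. rho A $ i) \<le> 1" if "is_chain le C" for C
  proof -
    have "(\<Sum>i\<in>C. rho A $ i) = (\<Sum>i\<in>C. if i \<in> A then 1 else 0)" by simp
    also have "\<dots> = real (card (C \<inter> A))"
      by (simp add: sum.If_cases Int_def)
    also have "\<dots> \<le> 1" using chain_antichain_le1[OF that assms] by simp
    finally show ?thesis .
  qed
  then show ?thesis by (auto simp: chain_polytope_def)
qed

lemma po_refl: "poset_order le \<Longrightarrow> le x x"
  by (simp add: poset_order_def)

lemma po_antisym: "poset_order le \<Longrightarrow> le x y \<Longrightarrow> le y x \<Longrightarrow> x = y"
  unfolding poset_order_def by blast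

lemma po_trans: "poset_order le \<Longrightarrow> le x y \<Longrightarrow> le y z \<Longrightarrow> le x z"
  unfolding poset_order_def by blast

lemma chain_single: "is_chain le {c}" if "poset_order le"
  using po_refl[OF that] by (simp add: is_chain_def)

lemma chain_pair: "le a b \<or> le b a \<Longrightarrow> poset_order le \<Longrightarrow> is_chain le {a, b}"
  using po_refl[of le] unfolding is_chain_def by blast

lemma C_le1: "x \<in> chain_polytope le \<Longrightarrow> poset_order le \<Longrightarrow> x $ c \<le> 1"
  using chain_single[of le c] by (auto simp: chain_polytope_def)

lemma C_pair: "x \<in> chain_polytope le \<Longrightarrow> poset_order le \<Longrightarrow> a \<noteq> b \<Longrightarrow> le a b \<or> le b a \<Longrightarrow> x $ a + x $ b \<le> 1"
  using chain_pair[of le a b] by (auto simp: chain_polytope_def)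




lemma not_connected_split:
  assumes "Q \<noteq> {}" "\<not> connected_in le Q"
  obtains X Y where "X \<noteq> {}" "Y \<noteq> {}" "X \<union> Y = Q" "X \<inter> Y = {}"
    "\<forall>x\<in>X. \<forall>y\<in>Y. \<not> le x y \<and> \<not> le y x"
proof -
  let ?R = "\<lambda>a b. a \<in> Q \<and> b \<in> Q \<and> (le a b \<or> le b a)"
  obtain a b where ab: "a \<in> Q" "b \<in> Q" "\<not> ?R\<^sup>*\<^sup>* a b" using assms unfolding connected_in_def by blast
  define X where "X = {y\<in>Q. ?R\<^sup>*\<^sup>* a y}"
  have "a \<in> X" using ab by (simp add: X_def)
  moreover have "b \<in> Q - X" using ab by (simp add: X_def)
  moreover have "\<forall>x\<in>X. \<forall>y\<in>Q - X. \<not> le x y \<and> \<not> le y x"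
  proof (intro ballI)
    fix x y assume x: "x \<in> X" and y: "y \<in> Q - X"
    have "\<not> (le x y \<or> le y x)"
    proof
      assume "le x y \<or> le y x"
      then have "?R x y" using x y by (auto simp: X_def)
      then have "?R\<^sup>*\<^sup>* a y" using x by (auto simp: X_def intro: rtranclp.rtrancl_into_rtrancl)
      then show False using y by (auto simp: X_def)
    qed
    then show "\<not> le x y \<and> \<not> le y x" by simp
  qed
  ultimately show ?thesis
  proof (intro that[of X "Q - X"])
    show "X \<union> (Q - X) = Q" by (auto simp: X_def)
  qed blast+
qed

lemma connected_bip:
  assumes "U \<noteq> {}" "V \<noteq> {}" "\<forall>u\<in>U. \<forall>v\<in>V. le u v \<or> le v u"
  shows "connected_in le (U \<union> V)"
proof -
  let ?Q = "U \<union> V"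
  let ?R = "\<lambda>a b. a \<in> ?Q \<and> b \<in> ?Q \<and> (le a b \<or> le b a)"
  obtain u0 v0 where u0: "u0 \<in> U" and v0: "v0 \<in> V" using assms by blast
  have to: "?R\<^sup>*\<^sup>* v0 x" if "x \<in> ?Q" for x
  proof (cases "x \<in> U")
    case True
    then have "?R v0 x" using assms v0 by blast
    then show ?thesis by blast
  next
    case False
    then have "x \<in> V" using that by blast
    then have r1: "?R v0 u0" and r2: "?R u0 x" using assms u0 v0 by blast+
    show ?thesis using rtranclp.rtrancl_into_rtrancl[OF r_into_rtranclp[of ?R, OF r1] r2] .
  qed
  have sym: "?R\<^sup>*\<^sup>* b a" if "?R\<^sup>*\<^sup>* a b" for a b
    using that
  proof (induction rule: rtranclp_induct)
    case base then show ?case by simp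
  next
    case (step y z)
    then have zy: "?R z y" by blast
    show ?case using converse_rtranclp_into_rtranclp[of ?R, OF zy step.IH] .
  qed
  show ?thesis unfolding connected_in_def
  proof (intro conjI ballI)
    show "?Q \<noteq> {}" using assms by blast
    fix x y assume x: "x \<in> ?Q" and y: "y \<in> ?Q"
    show "?R\<^sup>*\<^sup>* x y" using rtranclp_trans[OF sym[OF to[OF x]] to[OF y]] .
  qed
qed

lemma connected_antichain:
  assumes "is_antichain le Q"
  shows "connected_in le Q \<longleftrightarrow> (\<exists>x. Q = {x})"
proof
  assume c: "connected_in le Q"
  let ?R = "\<lambda>a b. a \<in> Q \<and> b \<in> Q \<and> (le a b \<or> le b a)"
  have eq: "a = b" if "?R\<^sup>*\<^sup>* a b" for a b
    using that
  proof (induction rule: rtranclp_induct)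
    case base then show ?case by simp
  next
    case (step y z)
    then show ?case using assms unfolding is_antichain_def by blast
  qed
  obtain x where "x \<in> Q" using c by (auto simp: connected_in_def)
  then have "Q = {x}" using c eq unfolding connected_in_def by blast
  then show "\<exists>x. Q = {x}" by blast
next
  assume "\<exists>x. Q = {x}"
  then show "connected_in le Q" by (auto simp: connected_in_def)
qed




lemma O_edge_pos:
  fixes le :: "'n::finite \<Rightarrow> 'n \<Rightarrow> bool"
  assumes po: "poset_order le" and I: "is_ideal le I" and J: "is_ideal le J"
    and sub: "I \<subseteq> J" "I \<noteq> J" and con: "connected_in le (J - I)"
  shows "is_edge (order_polytope le) (convex hull {rho I, rho J})"
proof -
  define L :: "((real^'n \<Rightarrow> real) \<times> real) set" where
    "L = {((\<lambda>x. x $ i), 1) | i. i \<in> I} \<union> {((\<lambda>x. - (x $ i)), 0) | i. i \<notin> J}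
       \<union> {((\<lambda>x. x $ j - x $ i), 0) | i j. i \<in> J - I \<and> j \<in> J - I \<and> le i j}"
  have "closed_segment (rho I) (rho J) face_of order_polytope le"
  proof (rule face_tight[where L = L])
    show "convex (order_polytope le)" by (rule convex_order_polytope)
    show "rho I \<in> order_polytope le" "rho J \<in> order_polytope le" using I J by (auto intro: rho_ideal_O)
    show "g x \<le> c" if "(g,c) \<in> L" "x \<in> order_polytope le" for g c x
      using that unfolding L_def order_polytope_def by auto
    show "g ((1-t) *\<^sub>R a + t *\<^sub>R b) = (1-t) * g a + t * g b" if "(g,c) \<in> L" for g c a b t
      using that unfolding L_def by (auto simp: algebra_simps)
    show "g (rho I) = c" if "(g,c) \<in> L" for g c using that sub unfolding L_def by (auto split: if_split_asm)
    show "g (rho J) = c" if "(g,c) \<in> L" for g c using that sub unfolding L_def by auto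
    show "x \<in> closed_segment (rho I) (rho J)"
      if xO: "x \<in> order_polytope le" and tight: "\<And>g c. (g,c) \<in> L \<Longrightarrow> g x = c" for x
    proof -
      have x1: "x $ i = 1" if "i \<in> I" for i using tight[of "\<lambda>x. x $ i" 1] that unfolding L_def by blast
      have x0: "x $ i = 0" if "i \<notin> J" for i using tight[of "\<lambda>x. - (x $ i)" 0] that unfolding L_def by auto
      have xe: "x $ j = x $ i" if "i \<in> J - I" "j \<in> J - I" "le i j" for i j
        using tight[of "\<lambda>x. x $ j - x $ i" 0] that unfolding L_def by auto
      obtain d0 where d0: "d0 \<in> J - I" using sub by blast
      define s where "s = x $ d0"
      let ?R = "\<lambda>a b. a \<in> J - I \<and> b \<in> J - I \<and> (le a b \<or> le b a)"
      have xr: "x $ y = s" if "?R\<^sup>*\<^sup>* d0 y" for y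
        using that
      proof (induction rule: rtranclp_induct)
        case base then show ?case by (simp add: s_def)
      next
        case (step y z)
        then have "x $ z = x $ y" using xe by metis
        then show ?case using step.IH by simp
      qed
      have xs: "x $ y = s" if "y \<in> J - I" for y
        using xr con d0 that unfolding connected_in_def by blast
      have s01: "0 \<le> s" "s \<le> 1" using xO unfolding order_polytope_def s_def by auto
      have "x = (1 - s) *\<^sub>R rho I + s *\<^sub>R rho J"
      proof (rule vec_eq_iff[THEN iffD2], intro allI)
        fix i
        show "x $ i = ((1 - s) *\<^sub>R rho I + s *\<^sub>R rho J) $ i"
        proof (cases "i \<in> I")
          case True then show ?thesis using x1 sub by auto
        next
          case False
          then show ?thesis using xs x0 by (cases "i \<in> J") auto
        qed
      qed
      then show ?thesis using s01 by (auto simp: in_segment)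
    qed
  qed
  moreover have "rho I \<noteq> rho J" using sub rho_inj by metis
  ultimately show ?thesis by (simp add: is_edge_iff)
qed

lemma ideal_inter: "is_ideal le I \<Longrightarrow> is_ideal le J \<Longrightarrow> is_ideal le (I \<inter> J)"
  unfolding is_ideal_def by blast

lemma ideal_union: "is_ideal le I \<Longrightarrow> is_ideal le J \<Longrightarrow> is_ideal le (I \<union> J)"
  unfolding is_ideal_def by blast

lemma O_not_edge_incomp:
  fixes le :: "'n::finite \<Rightarrow> 'n \<Rightarrow> bool"
  assumes I: "is_ideal le I" and J: "is_ideal le J" and nIJ: "\<not> I \<subseteq> J" and nJI: "\<not> J \<subseteq> I"
  shows "\<not> is_edge (order_polytope le) (convex hull {rho I, rho J})"
proof
  assume "is_edge (order_polytope le) (convex hull {rho I, rho J})"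
  then have f: "closed_segment (rho I) (rho J) face_of order_polytope le" by (simp add: is_edge_iff)
  obtain p q where p: "p \<in> I" "p \<notin> J" and q: "q \<in> J" "q \<notin> I" using nIJ nJI by blast
  show False
  proof (rule not_face_mid[OF f rho_ideal_O[OF ideal_inter[OF I J]] rho_ideal_O[OF ideal_union[OF I J]]])
    show "rho (I \<inter> J) + rho (I \<union> J) = rho I + rho J" by (auto simp: vec_eq_iff)
    show "rho (I \<inter> J) \<notin> closed_segment (rho I) (rho J)"
    proof
      assume "rho (I \<inter> J) \<in> closed_segment (rho I) (rho J)"
      then obtain u where u: "rho (I \<inter> J) = (1-u) *\<^sub>R rho I + u *\<^sub>R rho J" by (auto simp: in_segment)
      have "rho (I \<inter> J) $ p = ((1-u) *\<^sub>R rho I + u *\<^sub>R rho J) $ p"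
        "rho (I \<inter> J) $ q = ((1-u) *\<^sub>R rho I + u *\<^sub>R rho J) $ q" using u by simp_all
      then show False using p q by simp
    qed
  qed
qed

lemma O_not_edge_disc:
  fixes le :: "'n::finite \<Rightarrow> 'n \<Rightarrow> bool"
  assumes I: "is_ideal le I" and J: "is_ideal le J" and sub: "I \<subseteq> J" "I \<noteq> J"
    and nc: "\<not> connected_in le (J - I)"
  shows "\<not> is_edge (order_polytope le) (convex hull {rho I, rho J})"
proof
  assume "is_edge (order_polytope le) (convex hull {rho I, rho J})"
  then have f: "closed_segment (rho I) (rho J) face_of order_polytope le" by (simp add: is_edge_iff)
  obtain X Y where XY: "X \<noteq> {}" "Y \<noteq> {}" "X \<union> Y = J - I" "X \<inter> Y = {}"
    "\<forall>x\<in>X. \<forall>y\<in>Y. \<not> le x y \<and> \<not> le y x"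
    using not_connected_split[OF _ nc] sub by blast
  have idl: "is_ideal le (I \<union> X)" if "X \<union> Y = J - I" "\<forall>x\<in>X. \<forall>y\<in>Y. \<not> le x y \<and> \<not> le y x" for X Y
    unfolding is_ideal_def
  proof (intro allI impI)
    fix z y assume a: "y \<in> I \<union> X \<and> le z y"
    show "z \<in> I \<union> X"
    proof (cases "y \<in> I")
      case True then show ?thesis using I a unfolding is_ideal_def by blast
    next
      case False
      then have "y \<in> X" "y \<in> J" using a that by auto
      then have "z \<in> J" using J a unfolding is_ideal_def by blast
      then show ?thesis using that \<open>y \<in> X\<close> a by blast
    qed
  qed
  have i1: "is_ideal le (I \<union> X)" using idl XY by blast
  have i2: "is_ideal le (I \<union> Y)" using idl[of Y X] XY by blast
  obtain p q where p: "p \<in> X" and q: "q \<in> Y" using XY by blast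
  show False
  proof (rule not_face_mid[OF f rho_ideal_O[OF i1] rho_ideal_O[OF i2]])
    show "rho (I \<union> X) + rho (I \<union> Y) = rho I + rho J"
    proof (rule vec_eq_iff[THEN iffD2], intro allI)
      fix i show "(rho (I \<union> X) + rho (I \<union> Y)) $ i = (rho I + rho J) $ i"
        using XY sub by (cases "i \<in> I"; cases "i \<in> X"; cases "i \<in> Y"; auto)
    qed
    show "rho (I \<union> X) \<notin> closed_segment (rho I) (rho J)"
    proof
      assume "rho (I \<union> X) \<in> closed_segment (rho I) (rho J)"
      then obtain u where u: "rho (I \<union> X) = (1-u) *\<^sub>R rho I + u *\<^sub>R rho J" by (auto simp: in_segment)
      have "rho (I \<union> X) $ p = ((1-u) *\<^sub>R rho I + u *\<^sub>R rho J) $ p"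
        "rho (I \<union> X) $ q = ((1-u) *\<^sub>R rho I + u *\<^sub>R rho J) $ q" using u by simp_all
      moreover have "p \<notin> I" "p \<in> J" "q \<notin> I" "q \<in> J" "q \<notin> X" using XY p q by blast+
      ultimately show False using p by simp
    qed
  qed
qed




lemma C_edge_pos:
  fixes le :: "'n::finite \<Rightarrow> 'n \<Rightarrow> bool"
  assumes po: "poset_order le" and A: "is_antichain le A" and B: "is_antichain le B"
    and ne: "A \<noteq> B" and con: "connected_in le ((A - B) \<union> (B - A))"
  shows "is_edge (chain_polytope le) (convex hull {rho A, rho B})"
proof -
  define L :: "((real^'n \<Rightarrow> real) \<times> real) set" where
    "L = {((\<lambda>x. - (x $ i)), 0) | i. i \<notin> A \<union> B} \<union> {((\<lambda>x. x $ i), 1) | i. i \<in> A \<inter> B}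
       \<union> {((\<lambda>x. x $ a + x $ b), 1) | a b. a \<in> A - B \<and> b \<in> B - A \<and> (le a b \<or> le b a)}"
  have "closed_segment (rho A) (rho B) face_of chain_polytope le"
  proof (rule face_tight[where L = L])
    show "convex (chain_polytope le)" by (rule convex_chain_polytope)
    show "rho A \<in> chain_polytope le" "rho B \<in> chain_polytope le" using A B by (auto intro: rho_antichain_C)
    show "g x \<le> c" if gL: "(g,c) \<in> L" and xC: "x \<in> chain_polytope le" for g c x
    proof -
      have "0 \<le> x $ i" for i using xC by (auto simp: chain_polytope_def)
      moreover have "x $ i \<le> 1" for i using C_le1[OF xC po] .
      moreover have "x $ a + x $ b \<le> 1" if "a \<in> A - B" "b \<in> B - A" "le a b \<or> le b a" for a b
        using C_pair[OF xC po, of a b] that by blast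
      ultimately show ?thesis using gL unfolding L_def by auto
    qed
    show "g ((1-t) *\<^sub>R a + t *\<^sub>R b) = (1-t) * g a + t * g b" if "(g,c) \<in> L" for g c a b t
      using that unfolding L_def by (auto simp: algebra_simps)
    show "g (rho A) = c" if "(g,c) \<in> L" for g c using that unfolding L_def by (auto split: if_split_asm)
    show "g (rho B) = c" if "(g,c) \<in> L" for g c using that unfolding L_def by (auto split: if_split_asm)
    show "x \<in> closed_segment (rho A) (rho B)"
      if xC: "x \<in> chain_polytope le" and tight: "\<And>g c. (g,c) \<in> L \<Longrightarrow> g x = c" for x
    proof -
      have x0: "x $ i = 0" if "i \<notin> A \<union> B" for i using tight[of "\<lambda>x. - (x $ i)" 0] that unfolding L_def by auto
      have x1: "x $ i = 1" if "i \<in> A \<inter> B" for i using tight[of "\<lambda>x. x $ i" 1] that unfolding L_def by blast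
      have xp: "x $ a + x $ b = 1" if "a \<in> A - B" "b \<in> B - A" "le a b \<or> le b a" for a b
        using tight[of "\<lambda>x. x $ a + x $ b" 1] that unfolding L_def by blast
      let ?D = "(A - B) \<union> (B - A)"
      obtain d0 where d0: "d0 \<in> ?D" using ne by blast
      define t where "t = (if d0 \<in> A then x $ d0 else 1 - x $ d0)"
      let ?R = "\<lambda>a b. a \<in> ?D \<and> b \<in> ?D \<and> (le a b \<or> le b a)"
      have xr: "x $ y = (if y \<in> A then t else 1 - t)" if "?R\<^sup>*\<^sup>* d0 y" for y
        using that
      proof (induction rule: rtranclp_induct)
        case base then show ?case by (simp add: t_def)
      next
        case (step y z)
        show ?case
        proof (cases "y = z")
          case True then show ?thesis using step.IH by simp
        next
          case False
          have r: "y \<in> ?D" "z \<in> ?D" "le y z \<or> le z y" using step.hyps(2) by auto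
          show ?thesis
          proof (cases "y \<in> A")
            case True
            then have "z \<notin> A" using A r False unfolding is_antichain_def by blast
            then have "y \<in> A - B" "z \<in> B - A" using r True by auto
            then have "x $ y + x $ z = 1" using xp r by blast
            then show ?thesis using step.IH True \<open>z \<notin> A\<close> by simp
          next
            case yA: False
            then have "y \<in> B - A" using r by auto
            then have "z \<notin> B" using B r False unfolding is_antichain_def by blast
            then have "z \<in> A - B" using r by auto
            then have "x $ z + x $ y = 1" using xp r \<open>y \<in> B - A\<close> by blast
            then show ?thesis using step.IH yA \<open>z \<in> A - B\<close> by simp
          qed
        qed
      qed
      have xs: "x $ y = (if y \<in> A then t else 1 - t)" if "y \<in> ?D" for y
        using xr con d0 that unfolding connected_in_def by blast
      have "0 \<le> x $ d0" using xC by (auto simp: chain_polytope_def)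
      moreover have "x $ d0 \<le> 1" using C_le1[OF xC po] .
      ultimately have t01: "0 \<le> t" "t \<le> 1" unfolding t_def by auto
      have "x = (1 - (1 - t)) *\<^sub>R rho A + (1 - t) *\<^sub>R rho B"
      proof (rule vec_eq_iff[THEN iffD2], intro allI)
        fix i
        show "x $ i = ((1 - (1 - t)) *\<^sub>R rho A + (1 - t) *\<^sub>R rho B) $ i"
        proof (cases "i \<in> A \<inter> B")
          case True then show ?thesis using x1 by auto
        next
          case False
          then show ?thesis using xs x0 by (cases "i \<in> A"; cases "i \<in> B") auto
        qed
      qed
      then show ?thesis using t01 unfolding in_segment by (intro exI[of _ "1 - t"]) auto
    qed
  qed
  moreover have "rho A \<noteq> rho B" using ne rho_inj by metis
  ultimately show ?thesis by (simp add: is_edge_iff)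
qed



lemma C_not_edge:
  fixes le :: "'n::finite \<Rightarrow> 'n \<Rightarrow> bool"
  assumes A: "is_antichain le A" and B: "is_antichain le B"
    and ne: "A \<noteq> B" and nc: "\<not> connected_in le ((A - B) \<union> (B - A))"
  shows "\<not> is_edge (chain_polytope le) (convex hull {rho A, rho B})"
proof
  assume "is_edge (chain_polytope le) (convex hull {rho A, rho B})"
  then have f: "closed_segment (rho A) (rho B) face_of chain_polytope le" by (simp add: is_edge_iff)
  obtain X Y where XY: "X \<noteq> {}" "Y \<noteq> {}" "X \<union> Y = (A - B) \<union> (B - A)" "X \<inter> Y = {}"
    "\<forall>x\<in>X. \<forall>y\<in>Y. \<not> le x y \<and> \<not> le y x"
    using not_connected_split[OF _ nc] ne by blast
  have anti: "is_antichain le ((A \<inter> B) \<union> (A \<inter> X) \<union> (B \<inter> Y))"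
    if "X \<union> Y = (A - B) \<union> (B - A)" "X \<inter> Y = {}" "\<forall>x\<in>X. \<forall>y\<in>Y. \<not> le x y \<and> \<not> le y x" for X Y
    unfolding is_antichain_def
  proof (intro ballI impI)
    fix p q assume p: "p \<in> (A \<inter> B) \<union> (A \<inter> X) \<union> (B \<inter> Y)" and q: "q \<in> (A \<inter> B) \<union> (A \<inter> X) \<union> (B \<inter> Y)"
      and pq: "le p q"
    show "p = q"
    proof (cases "p \<in> A \<and> q \<in> A")
      case True then show ?thesis using A pq unfolding is_antichain_def by blast
    next
      case F1: False
      show ?thesis
      proof (cases "p \<in> B \<and> q \<in> B")
        case True then show ?thesis using B pq unfolding is_antichain_def by blast
      next
        case False
        then have "(p \<in> A \<inter> X \<and> q \<in> B \<inter> Y) \<or> (p \<in> B \<inter> Y \<and> q \<in> A \<inter> X)" using F1 p q by blast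
        then show ?thesis using that(3) pq by blast
      qed
    qed
  qed
  have a1: "is_antichain le ((A \<inter> B) \<union> (A \<inter> X) \<union> (B \<inter> Y))" using anti[OF XY(3) XY(4) XY(5)] .
  have s2: "Y \<union> X = (A - B) \<union> (B - A)" "Y \<inter> X = {}" using XY(3,4) by blast+
  have s3: "\<forall>x\<in>Y. \<forall>y\<in>X. \<not> le x y \<and> \<not> le y x" using XY(5) by blast
  have a2: "is_antichain le ((A \<inter> B) \<union> (A \<inter> Y) \<union> (B \<inter> X))" using anti[OF s2 s3] .
  obtain p q where p: "p \<in> X" and q: "q \<in> Y" using XY by blast
  have XD: "\<And>i. i \<in> X \<Longrightarrow> (i \<in> A) \<noteq> (i \<in> B)" and YD: "\<And>i. i \<in> Y \<Longrightarrow> (i \<in> A) \<noteq> (i \<in> B)"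
    and DXY: "\<And>i. (i \<in> A) \<noteq> (i \<in> B) \<Longrightarrow> i \<in> X \<or> i \<in> Y"
    and XnY: "\<And>i. i \<in> X \<Longrightarrow> i \<notin> Y"
    using XY(3,4) by blast+
  let ?a = "rho ((A \<inter> B) \<union> (A \<inter> X) \<union> (B \<inter> Y))"
  show False
  proof (rule not_face_mid[OF f rho_antichain_C[OF a1] rho_antichain_C[OF a2]])
    show "?a + rho ((A \<inter> B) \<union> (A \<inter> Y) \<union> (B \<inter> X)) = rho A + rho B"
    proof (rule vec_eq_iff[THEN iffD2], intro allI)
      fix i show "(?a + rho ((A \<inter> B) \<union> (A \<inter> Y) \<union> (B \<inter> X))) $ i = (rho A + rho B) $ i"
        using XD[of i] YD[of i] DXY[of i] XnY[of i]
        by (cases "i \<in> A"; cases "i \<in> B"; cases "i \<in> X"; cases "i \<in> Y"; simp)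
    qed
    show "?a \<notin> closed_segment (rho A) (rho B)"
    proof
      assume "?a \<in> closed_segment (rho A) (rho B)"
      then obtain u where u: "?a = (1-u) *\<^sub>R rho A + u *\<^sub>R rho B" by (auto simp: in_segment)
      have ep: "?a $ p = ((1-u) *\<^sub>R rho A + u *\<^sub>R rho B) $ p"
        and eq: "?a $ q = ((1-u) *\<^sub>R rho A + u *\<^sub>R rho B) $ q" using u by simp_all
      have "u = 0"
        using ep p XD[OF p] XnY[OF p] by (cases "p \<in> A"; cases "p \<in> B"; simp)
      moreover have qX: "q \<notin> X" using XnY q by blast
      moreover have "u = 1"
        using eq q YD[OF q] qX by (cases "q \<in> A"; cases "q \<in> B"; simp)
      ultimately show False by simp
    qed
  qed
qed




lemma O_edge_iff:
  fixes le :: "'n::finite \<Rightarrow> 'n \<Rightarrow> bool"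
  assumes po: "poset_order le" and I: "is_ideal le I" and J: "is_ideal le J" and ne: "I \<noteq> J"
  shows "is_edge (order_polytope le) (convex hull {rho I, rho J}) \<longleftrightarrow>
    (I \<subseteq> J \<and> connected_in le (J - I)) \<or> (J \<subseteq> I \<and> connected_in le (I - J))"
proof
  assume e: "is_edge (order_polytope le) (convex hull {rho I, rho J})"
  show "(I \<subseteq> J \<and> connected_in le (J - I)) \<or> (J \<subseteq> I \<and> connected_in le (I - J))"
  proof (cases "I \<subseteq> J")
    case True
    then show ?thesis using O_not_edge_disc[OF I J True ne] e by blast
  next
    case False
    then have "J \<subseteq> I" using O_not_edge_incomp[OF I J] e by blast
    moreover have "is_edge (order_polytope le) (convex hull {rho J, rho I})" using e by (simp add: insert_commute)
    ultimately show ?thesis using O_not_edge_disc[OF J I _ not_sym[OF ne]] by blast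
  qed
next
  assume "(I \<subseteq> J \<and> connected_in le (J - I)) \<or> (J \<subseteq> I \<and> connected_in le (I - J))"
  then show "is_edge (order_polytope le) (convex hull {rho I, rho J})"
  proof
    assume "I \<subseteq> J \<and> connected_in le (J - I)"
    then show ?thesis using O_edge_pos[OF po I J _ ne] by blast
  next
    assume "J \<subseteq> I \<and> connected_in le (I - J)"
    then have "is_edge (order_polytope le) (convex hull {rho J, rho I})" using O_edge_pos[OF po J I _ not_sym[OF ne]] by blast
    then show ?thesis by (simp add: insert_commute)
  qed
qed

lemma C_edge_iff:
  fixes le :: "'n::finite \<Rightarrow> 'n \<Rightarrow> bool"
  assumes po: "poset_order le" and A: "is_antichain le A" and B: "is_antichain le B" and ne: "A \<noteq> B"
  shows "is_edge (chain_polytope le) (convex hull {rho A, rho B}) \<longleftrightarrow> connected_in le ((A - B) \<union> (B - A))"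
  using C_edge_pos[OF po A B ne] C_not_edge[OF A B ne] by blast

section \<open>Rank structure\<close>

lemma exists_max_chain:
  fixes le :: "'n::finite \<Rightarrow> 'n \<Rightarrow> bool"
  assumes "is_chain le C0"
  shows "\<exists>C. maximal_chain le C \<and> C0 \<subseteq> C"
proof -
  define S where "S = {D. is_chain le D \<and> C0 \<subseteq> D}"
  have fin: "finite S" by simp
  have "C0 \<in> S" using assms by (simp add: S_def)
  then have ne: "card ` S \<noteq> {}" by blast
  obtain D where D: "D \<in> S" "card D = Max (card ` S)" using Max_in[OF finite_imageI[OF fin] ne] by auto
  have "maximal_chain le D" unfolding maximal_chain_def
  proof (intro conjI allI impI)
    show "is_chain le D" using D by (simp add: S_def)
    fix D' assume a: "is_chain le D' \<and> D \<subseteq> D'"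
    then have "D' \<in> S" using D by (auto simp: S_def)
    then have "card D' \<le> card D" using D Max_ge[OF finite_imageI[OF fin]] by auto
    then show "D' = D" using a card_seteq[of D' D] by auto
  qed
  then show ?thesis using D by (auto simp: S_def)
qed

lemma maxchain_ext:
  assumes "maximal_chain le C" "is_chain le (insert z C)"
  shows "z \<in> C"
  using assms unfolding maximal_chain_def by blast

lemma maxchain_card:
  assumes "graded le n" "maximal_chain le C" shows "card C = n + 1"
  using assms unfolding graded_def by blast

definition below :: "('n \<Rightarrow> 'n \<Rightarrow> bool) \<Rightarrow> 'n set \<Rightarrow> 'n \<Rightarrow> 'n set" where
  "below le C x = {y\<in>C. le y x \<and> y \<noteq> x}"
definition above :: "('n \<Rightarrow> 'n \<Rightarrow> bool) \<Rightarrow> 'n set \<Rightarrow> 'n \<Rightarrow> 'n set" where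
  "above le C x = {y\<in>C. le x y \<and> y \<noteq> x}"

lemma chain_decomp:
  assumes po: "poset_order le" and ch: "is_chain le C" and x: "x \<in> C"
  shows "C = below le C x \<union> {x} \<union> above le C x"
    "below le C x \<inter> above le C x = {}" "x \<notin> below le C x" "x \<notin> above le C x"
  using ch x po_antisym[OF po] unfolding is_chain_def below_def above_def by blast+

lemma swap_chain:
  fixes le :: "'n::finite \<Rightarrow> 'n \<Rightarrow> bool"
  assumes po: "poset_order le" and C: "maximal_chain le C" and C': "maximal_chain le C'"
    and x: "x \<in> C" "x \<in> C'"
  shows "maximal_chain le (below le C' x \<union> {x} \<union> above le C x)"
proof -
  let ?D = "below le C' x \<union> {x} \<union> above le C x"
  have chC: "is_chain le C" and chC': "is_chain le C'" using C C' by (auto simp: maximal_chain_def)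
  have chD: "is_chain le ?D" unfolding is_chain_def
  proof (intro ballI)
    fix a b assume a: "a \<in> ?D" and b: "b \<in> ?D"
    show "le a b \<or> le b a"
    proof -
      have "le a b \<or> le b a" if "a \<in> below le C' x" "b \<in> above le C x" for a b
        using that po_trans[OF po] unfolding below_def above_def by blast
      moreover have "le a b \<or> le b a" if "a \<in> below le C' x" "b \<in> below le C' x" for a b
        using that chC' unfolding below_def is_chain_def by blast
      moreover have "le a b \<or> le b a" if "a \<in> above le C x" "b \<in> above le C x" for a b
        using that chC unfolding above_def is_chain_def by blast
      moreover have "le a x \<or> le x a" if "a \<in> ?D" for a
        using that po_refl[OF po] unfolding below_def above_def by blast
      ultimately show ?thesis using a b by blast
    qed
  qed
  show ?thesis unfolding maximal_chain_def
  proof (intro conjI allI impI)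
    show "is_chain le ?D" by (rule chD)
    fix E assume E: "is_chain le E \<and> ?D \<subseteq> E"
    have "z \<in> ?D" if z: "z \<in> E" for z
    proof -
      have xE: "x \<in> E" using E by blast
      then have zx: "le z x \<or> le x z" using E z unfolding is_chain_def by blast
      show ?thesis
      proof (cases "z = x")
        case True then show ?thesis by blast
      next
        case False
        show ?thesis
        proof (cases "le z x")
          case True
          have "is_chain le (insert z C')" unfolding is_chain_def
          proof (intro ballI)
            fix a b assume a: "a \<in> insert z C'" and b: "b \<in> insert z C'"
            have zw: "le z w \<or> le w z" if w: "w \<in> C'" for w
            proof -
              have "le w x \<or> le x w" using chC' w x unfolding is_chain_def by blast
              moreover have "le z w \<or> le w z" if "le w x" "w \<noteq> x"
              proof -
                have "w \<in> E" using E w that unfolding below_def by blast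
                then show ?thesis using E z unfolding is_chain_def by blast
              qed
              moreover have "le z w" if "le x w" using po_trans[OF po True that] .
              ultimately show ?thesis using True by blast
            qed
            show "le a b \<or> le b a"
              using a b zw chC' po_refl[OF po] unfolding is_chain_def by blast
          qed
          then have "z \<in> C'" using maxchain_ext[OF C'] by blast
          then show ?thesis using True False unfolding below_def by blast
        next
          case nle: False
          then have True: "le x z" using zx by blast
          have "is_chain le (insert z C)" unfolding is_chain_def
          proof (intro ballI)
            fix a b assume a: "a \<in> insert z C" and b: "b \<in> insert z C"
            have zw: "le z w \<or> le w z" if w: "w \<in> C" for w
            proof -
              have "le w x \<or> le x w" using chC w x unfolding is_chain_def by blast
              moreover have "le z w \<or> le w z" if "le x w" "w \<noteq> x"
              proof -
                have "w \<in> E" using E w that unfolding above_def by blast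
                then show ?thesis using E z unfolding is_chain_def by blast
              qed
              moreover have "le w z" if "le w x" using po_trans[OF po that True] .
              ultimately show ?thesis using True by blast
            qed
            show "le a b \<or> le b a"
              using a b zw chC po_refl[OF po] unfolding is_chain_def by blast
          qed
          then have "z \<in> C" using maxchain_ext[OF C] by blast
          then show ?thesis using True False unfolding above_def by blast
        qed
      qed
    qed
    then show "E = ?D" using E by blast
  qed
qed

lemma card3:
  fixes L U :: "'n::finite set"
  assumes "L \<inter> U = {}" "x \<notin> L" "x \<notin> U"
  shows "card (L \<union> {x} \<union> U) = card L + 1 + card U"
proof -
  have "card (L \<union> {x}) = card L + 1" using assms by simp
  moreover have "(L \<union> {x}) \<inter> U = {}" using assms by blast
  then have "card ((L \<union> {x}) \<union> U) = card (L \<union> {x}) + card U" by (intro card_Un_disjoint) auto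
  ultimately show ?thesis by linarith
qed

lemma below_card_eq:
  fixes le :: "'n::finite \<Rightarrow> 'n \<Rightarrow> bool"
  assumes po: "poset_order le" and g: "graded le n"
    and C: "maximal_chain le C" and C': "maximal_chain le C'" and x: "x \<in> C" "x \<in> C'"
  shows "card (below le C x) = card (below le C' x)"
proof -
  have chC: "is_chain le C" and chC': "is_chain le C'" using C C' by (auto simp: maximal_chain_def)
  let ?D = "below le C' x \<union> {x} \<union> above le C x"
  have mD: "maximal_chain le ?D" by (rule swap_chain[OF po C C' x])
  have dC: "C = below le C x \<union> {x} \<union> above le C x" "below le C x \<inter> above le C x = {}"
    "x \<notin> below le C x" "x \<notin> above le C x" using chain_decomp[OF po chC x(1)] by auto
  have dC': "below le C' x \<inter> above le C x = {}" "x \<notin> below le C' x"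
    using chain_decomp[OF po chC' x(2)] po_antisym[OF po] unfolding below_def above_def by blast+
  have "card C = card (below le C x) + 1 + card (above le C x)"
    using card3[OF dC(2-4)] dC(1) by simp
  moreover have "card ?D = card (below le C' x) + 1 + card (above le C x)"
    using card3[OF dC'(1) dC'(2) dC(4)] by simp
  moreover have "card C = card ?D" using maxchain_card[OF g C] maxchain_card[OF g mD] by simp
  ultimately show ?thesis by simp
qed




definition rk :: "('n::finite \<Rightarrow> 'n \<Rightarrow> bool) \<Rightarrow> 'n \<Rightarrow> nat" where
  "rk le x = card (below le (SOME C. maximal_chain le C \<and> x \<in> C) x)"

lemma exists_max_chain_pt:
  fixes le :: "'n::finite \<Rightarrow> 'n \<Rightarrow> bool"
  assumes po: "poset_order le"
  shows "\<exists>C. maximal_chain le C \<and> x \<in> C"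
  using exists_max_chain[OF chain_single[OF po, of x]] by blast

lemma rk_chain:
  fixes le :: "'n::finite \<Rightarrow> 'n \<Rightarrow> bool"
  assumes po: "poset_order le" and g: "graded le n" and C: "maximal_chain le C" and x: "x \<in> C"
  shows "rk le x = card (below le C x)"
proof -
  let ?C = "SOME C. maximal_chain le C \<and> x \<in> C"
  have "maximal_chain le ?C \<and> x \<in> ?C" using someI_ex[OF exists_max_chain_pt[OF po, of x]] .
  then show ?thesis unfolding rk_def using below_card_eq[OF po g _ C _ x] by blast
qed

lemma rank_level_iff:
  fixes le :: "'n::finite \<Rightarrow> 'n \<Rightarrow> bool"
  assumes po: "poset_order le" and g: "graded le n"
  shows "x \<in> rank_level le i \<longleftrightarrow> rk le x = i"
proof
  assume "x \<in> rank_level le i"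
  then obtain C where "maximal_chain le C" "x \<in> C" "card (below le C x) = i"
    unfolding rank_level_def below_def by blast
  then show "rk le x = i" using rk_chain[OF po g] by simp
next
  assume a: "rk le x = i"
  obtain C where C: "maximal_chain le C" "x \<in> C" using exists_max_chain_pt[OF po] by blast
  then have "card (below le C x) = i" using rk_chain[OF po g C] a by simp
  then show "x \<in> rank_level le i" using C unfolding rank_level_def below_def by blast
qed

lemma below_psubset:
  fixes le :: "'n::finite \<Rightarrow> 'n \<Rightarrow> bool"
  assumes po: "poset_order le" and xy: "le x y" "x \<noteq> y" and x: "x \<in> C"
  shows "card (below le C x) < card (below le C y)"
proof (rule psubset_card_mono)
  show "finite (below le C y)" by simp
  have "below le C x \<subseteq> below le C y"
    using po_trans[OF po _ xy(1)] po_antisym[OF po _ xy(1)] unfolding below_def by blast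
  moreover have "x \<in> below le C y" "x \<notin> below le C x" using xy x unfolding below_def by auto
  ultimately show "below le C x \<subset> below le C y" by blast
qed

lemma rk_less:
  fixes le :: "'n::finite \<Rightarrow> 'n \<Rightarrow> bool"
  assumes po: "poset_order le" and g: "graded le n" and xy: "le x y" "x \<noteq> y"
  shows "rk le x < rk le y"
proof -
  obtain C where C: "maximal_chain le C" "{x, y} \<subseteq> C"
    using exists_max_chain[OF chain_pair[OF _ po, of x y]] xy by blast
  then show ?thesis using rk_chain[OF po g C(1)] below_psubset[OF po xy] by simp
qed

lemma rk_le_n:
  fixes le :: "'n::finite \<Rightarrow> 'n \<Rightarrow> bool"
  assumes po: "poset_order le" and g: "graded le n"
  shows "rk le x \<le> n"
proof -
  obtain C where C: "maximal_chain le C" "x \<in> C" using exists_max_chain_pt[OF po] by blast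
  have "below le C x \<subset> C" using C(2) unfolding below_def by blast
  then have "card (below le C x) < card C" by (simp add: psubset_card_mono)
  then show ?thesis using rk_chain[OF po g C] maxchain_card[OF g C(1)] by simp
qed

lemma rk_surj:
  fixes le :: "'n::finite \<Rightarrow> 'n \<Rightarrow> bool"
  assumes po: "poset_order le" and g: "graded le n" and i: "i \<le> n"
  shows "\<exists>x. rk le x = i"
proof -
  obtain C where C: "maximal_chain le C" using exists_max_chain[of le "{}"] by (auto simp: is_chain_def)
  have chC: "is_chain le C" using C by (simp add: maximal_chain_def)
  have inj: "inj_on (rk le) C"
  proof (rule inj_onI)
    fix x y assume x: "x \<in> C" and y: "y \<in> C" and e: "rk le x = rk le y"
    show "x = y"
    proof (rule ccontr)
      assume "x \<noteq> y"
      moreover have "le x y \<or> le y x" using chC x y unfolding is_chain_def by blast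
      ultimately show False using rk_less[OF po g, of x y] rk_less[OF po g, of y x] e by force
    qed
  qed
  have sub: "rk le ` C \<subseteq> {..<n+1}" using rk_le_n[OF po g] by (auto simp: less_Suc_eq_le)
  have "card (rk le ` C) = n + 1" using card_image[OF inj] maxchain_card[OF g C] by simp
  then have "rk le ` C = {..<n+1}" using card_subset_eq[OF _ sub] by simp
  then show ?thesis using i by (metis imageE lessThan_iff less_Suc_eq_le Suc_eq_plus1)
qed

lemma le_iff_rk:
  fixes le :: "'n::finite \<Rightarrow> 'n \<Rightarrow> bool"
  assumes po: "poset_order le" and mr: "maximal_ranked le n"
  shows "le x y \<longleftrightarrow> x = y \<or> rk le x < rk le y"
proof -
  have g: "graded le n" using mr by (simp add: maximal_ranked_def)
  show ?thesis
  proof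
    assume "le x y" then show "x = y \<or> rk le x < rk le y" using rk_less[OF po g] by blast
  next
    assume a: "x = y \<or> rk le x < rk le y"
    show "le x y"
    proof (cases "x = y")
      case True then show ?thesis using po_refl[OF po] by simp
    next
      case False
      then have lt: "rk le x < rk le y" using a by simp
      have "x \<in> rank_level le (rk le x)" "y \<in> rank_level le (rk le y)" using rank_level_iff[OF po g] by auto
      then have "le x y \<or> le y x" using mr lt unfolding maximal_ranked_def by (metis less_irrefl)
      moreover have "\<not> le y x" using rk_less[OF po g, of y x] lt False by auto
      ultimately show ?thesis by blast
    qed
  qed
qed




context
  fixes le :: "'n::finite \<Rightarrow> 'n \<Rightarrow> bool" and n :: nat
  assumes po: "poset_order le" and mr: "maximal_ranked le n"
begin

lemma g: "graded le n" using mr by (simp add: maximal_ranked_def)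

lemma LE: "le x y \<longleftrightarrow> x = y \<or> rk le x < rk le y"
  using le_iff_rk[OF po mr] .

lemma RL: "rank_level le i = {x. rk le x = i}"
  using rank_level_iff[OF po g] by auto

lemma anti_rank: "is_antichain le Q \<Longrightarrow> x \<in> Q \<Longrightarrow> y \<in> Q \<Longrightarrow> rk le x = rk le y"
  unfolding is_antichain_def using LE by (metis linorder_neqE_nat)

lemma level_anti: "is_antichain le {x. rk le x = i}"
  unfolding is_antichain_def using LE by auto

lemma ideal_low: "is_ideal le J \<Longrightarrow> x \<in> J \<Longrightarrow> rk le y < rk le x \<Longrightarrow> y \<in> J"
  unfolding is_ideal_def using LE by blast

lemma maxs_eq:
  assumes J: "is_ideal le J" and ne: "J \<noteq> {}"
  shows "maxs le J = {x\<in>J. rk le x = Max (rk le ` J)}"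
proof -
  let ?m = "Max (rk le ` J)"
  have "?m \<in> rk le ` J" using ne by (intro Max_in) auto
  then obtain y where y: "y \<in> J" "rk le y = ?m" by auto
  have le_m: "rk le x \<le> ?m" if "x \<in> J" for x using that by simp
  show ?thesis
  proof (intro set_eqI iffI)
    fix x assume x: "x \<in> maxs le J"
    then have xJ: "x \<in> J" and mx: "\<forall>z\<in>J. le x z \<longrightarrow> z = x" unfolding maxs_def by auto
    have "rk le x = ?m"
    proof (rule ccontr)
      assume "rk le x \<noteq> ?m"
      then have "rk le x < rk le y" using le_m[OF xJ] y by simp
      then have "le x y" "y \<noteq> x" using LE by auto
      then show False using mx y by blast
    qed
    then show "x \<in> {x\<in>J. rk le x = ?m}" using xJ by simp
  next
    fix x assume x: "x \<in> {x\<in>J. rk le x = ?m}"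
    have "z = x" if "z \<in> J" "le x z" for z
    proof -
      have "x = z \<or> rk le x < rk le z" using LE that(2) by blast
      then show ?thesis using x le_m[OF that(1)] by auto
    qed
    then show "x \<in> maxs le J" using x unfolding maxs_def by auto
  qed
qed

lemma maxs_anti: "is_antichain le (maxs le J)"
  unfolding is_antichain_def maxs_def by blast

lemma maxs_ne: "is_ideal le J \<Longrightarrow> J \<noteq> {} \<Longrightarrow> maxs le J \<noteq> {}"
proof -
  assume J: "is_ideal le J" and ne: "J \<noteq> {}"
  have "Max (rk le ` J) \<in> rk le ` J" using ne by (intro Max_in) auto
  then show ?thesis using maxs_eq[OF J ne] by auto
qed

lemma maxs_empty: "maxs le {} = {}" by (simp add: maxs_def)

lemma anti_conn_card: "is_antichain le Q \<Longrightarrow> Q \<noteq> {} \<Longrightarrow> connected_in le Q \<longleftrightarrow> \<not> 2 \<le> card Q"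
proof -
  assume a: "is_antichain le Q" "Q \<noteq> {}"
  have "(\<exists>x. Q = {x}) \<longleftrightarrow> card Q = 1" by (simp add: card_1_singleton_iff)
  moreover have "card Q \<noteq> 0" using a by simp
  then have "card Q = 1 \<longleftrightarrow> \<not> 2 \<le> card Q" by linarith
  ultimately show ?thesis using connected_antichain[OF a(1)] by simp
qed

lemma antichain_empty: "is_antichain le {}" by (simp add: is_antichain_def)

lemma aMain:
  assumes I: "is_ideal le I" and J: "is_ideal le J" and sub: "I \<subseteq> J" and ne: "I \<noteq> J"
  shows "E_star_O le I J \<longleftrightarrow> (I = {} \<and> connected_in le J \<and> 2 \<le> card (maxs le J))"
proof -
  have Jne: "J \<noteq> {}" using sub ne by blast
  have Oe: "is_edge (order_polytope le) (convex hull {rho I, rho J}) \<longleftrightarrow> connected_in le (J - I)"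
    using O_edge_iff[OF po I J ne] sub ne by blast
  show ?thesis
  proof (cases "I = {}")
    case True
    have MJ: "maxs le J \<noteq> {}" using maxs_ne[OF J Jne] .
    have "is_edge (chain_polytope le) (convex hull {rho (maxs le I), rho (maxs le J)}) \<longleftrightarrow>
        connected_in le (maxs le J)"
      using C_edge_iff[OF po antichain_empty maxs_anti, of J] MJ True maxs_empty by auto
    then show ?thesis
      unfolding E_star_O_def using Oe True I J ne anti_conn_card[OF maxs_anti MJ] by auto
  next
    case False
    let ?k = "Max (rk le ` I)" and ?m = "Max (rk le ` J)"
    let ?MI = "{x\<in>I. rk le x = ?k}" and ?MJ = "{x\<in>J. rk le x = ?m}"
    have MI: "maxs le I = ?MI" using maxs_eq[OF I False] .
    have MJ: "maxs le J = ?MJ" using maxs_eq[OF J Jne] .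
    have "?k \<in> rk le ` I" using False by (intro Max_in) auto
    then obtain yI where yI: "yI \<in> I" "rk le yI = ?k" by auto
    have "?m \<in> rk le ` J" using Jne by (intro Max_in) auto
    then obtain yJ where yJ: "yJ \<in> J" "rk le yJ = ?m" by auto
    have km: "?k \<le> ?m" using Max_mono[of "rk le ` I" "rk le ` J"] sub False by auto
    have "\<not> E_star_O le I J"
    proof
      assume E: "E_star_O le I J"
      then have con: "connected_in le (J - I)" using Oe unfolding E_star_O_def by blast
      have nC: "\<not> is_edge (chain_polytope le) (convex hull {rho ?MI, rho ?MJ})"
        using E MI MJ unfolding E_star_O_def by simp
      have aI: "is_antichain le ?MI" and aJ: "is_antichain le ?MJ" using maxs_anti MI MJ by metis+
      show False
      proof (cases "?k = ?m")
        case True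
        have s1: "?MI - ?MJ = {}" using sub True by auto
        have s2: "?MJ - ?MI = J - I"
        proof (intro set_eqI iffI)
          fix x assume "x \<in> ?MJ - ?MI" then show "x \<in> J - I" using True by auto
        next
          fix x assume x: "x \<in> J - I"
          have a1: "rk le x \<le> ?m" using x by simp
          have a2: "\<not> rk le x < ?k" using ideal_low[OF I yI(1), of x] yI x by auto
          have "rk le x = ?m" using a1 a2 True by linarith
          then show "x \<in> ?MJ - ?MI" using x by auto
        qed
        have "?MI \<noteq> ?MJ" using s1 s2 ne sub by blast
        moreover have "connected_in le ((?MI - ?MJ) \<union> (?MJ - ?MI))" unfolding s1 s2 using con by simp
        ultimately show False using C_edge_pos[OF po aI aJ] nC by blast
      next
        case False
        then have lt: "?k < ?m" using km by simp
        have d: "(?MI - ?MJ) \<union> (?MJ - ?MI) = ?MI \<union> ?MJ" using lt by auto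
        have n1: "?MI \<noteq> {}" using yI by blast
        have n2: "?MJ \<noteq> {}" using yJ by blast
        have bp: "\<forall>u\<in>?MI. \<forall>v\<in>?MJ. le u v \<or> le v u"
        proof (intro ballI)
          fix u v assume u: "u \<in> ?MI" and v: "v \<in> ?MJ"
          then have "rk le u < rk le v" using lt by simp
          then show "le u v \<or> le v u" using LE by blast
        qed
        have "connected_in le ((?MI - ?MJ) \<union> (?MJ - ?MI))" unfolding d by (rule connected_bip[OF n1 n2 bp])
        moreover have "yI \<notin> ?MJ" using yI lt by simp
        then have "?MI \<noteq> ?MJ" using yI by blast
        ultimately show False using C_edge_pos[OF po aI aJ] nC by blast
      qed
    qed
    then show ?thesis using False by blast
  qed
qed


lemma down_empty: "down le {} = {}" by (simp add: down_def)

lemma down_ideal: "is_ideal le (down le A)"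
  unfolding is_ideal_def down_def using po_trans[OF po] by blast

lemma down_rank:
  assumes ne: "A \<noteq> {}" and k: "\<forall>a\<in>A. rk le a = k"
  shows "down le A = {x. rk le x < k} \<union> A"
proof (intro set_eqI iffI)
  fix x assume "x \<in> down le A"
  then obtain p where p: "p \<in> A" "le x p" unfolding down_def by blast
  then show "x \<in> {x. rk le x < k} \<union> A" using LE k by auto
next
  fix x assume x: "x \<in> {x. rk le x < k} \<union> A"
  obtain p where p: "p \<in> A" using ne by blast
  show "x \<in> down le A"
  proof (cases "x \<in> A")
    case True then show ?thesis unfolding down_def using po_refl[OF po] by blast
  next
    case False
    then have "rk le x < rk le p" using x p k by auto
    then have "le x p" using LE by blast
    then show ?thesis unfolding down_def using p by blast
  qed
qed

lemma O_edge_same_level: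
  assumes A: "is_antichain le A" and B: "is_antichain le B" and sub: "A \<subseteq> B" and z: "B - A = {z}"
    and neA: "A \<noteq> {}" and k: "\<forall>b\<in>B. rk le b = k"
  shows "is_edge (order_polytope le) (convex hull {rho (down le A), rho (down le B)})"
proof -
  have dA: "down le A = {x. rk le x < k} \<union> A" using down_rank[OF neA] k sub by blast
  have dB: "down le B = {x. rk le x < k} \<union> B" using down_rank[of B k] k neA sub by blast
  have zk: "rk le z = k" using z k by blast
  have d: "down le B - down le A = {z}" unfolding dA dB using z zk by auto
  show ?thesis
  proof (rule O_edge_pos[OF po down_ideal down_ideal])
    show "down le A \<subseteq> down le B" unfolding dA dB using sub by blast
    show "down le A \<noteq> down le B" using d by blast
    show "connected_in le (down le B - down le A)" unfolding d by (simp add: connected_in_def)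
  qed
qed

lemma bMain:
  assumes A: "is_antichain le A" and B: "is_antichain le B" and ne: "A \<noteq> B"
    and wl: "A = {} \<or> (A \<noteq> {} \<and> B \<noteq> {} \<and> (\<forall>a\<in>A. \<forall>b\<in>B. rk le a \<le> rk le b))"
  shows "E_star_C le A B \<longleftrightarrow>
              (\<exists>l. 1 \<le> l \<and> l \<le> n \<and>
                 ((A = rank_level le (l - 1) \<and> B \<subseteq> rank_level le l \<and> card B \<ge> 2) \<or>
                  (B = rank_level le (l - 1) \<and> A \<subseteq> rank_level le l \<and> card A \<ge> 2)))"
    (is "?L \<longleftrightarrow> ?R")
proof (cases "A = {}")
  case True
  have nR: "\<not> ?R"
  proof
    assume ?R
    then obtain l where l: "1 \<le> l" "l \<le> n"
      "(A = rank_level le (l - 1) \<and> B \<subseteq> rank_level le l \<and> card B \<ge> 2) \<or>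
       (B = rank_level le (l - 1) \<and> A \<subseteq> rank_level le l \<and> card A \<ge> 2)" by blast
    have "l - 1 \<le> n" using l by simp
    then obtain x where "rk le x = l - 1" using rk_surj[OF po g] by blast
    then have "rank_level le (l - 1) \<noteq> {}" unfolding RL by blast
    then show False using l True by auto
  qed
  have nL: "\<not> ?L"
  proof
    assume E: ?L
    have Bne: "B \<noteq> {}" using ne True by simp
    have "connected_in le B" using E C_edge_iff[OF po A B ne] True unfolding E_star_C_def by simp
    then obtain b where b: "B = {b}" using connected_antichain[OF B] by blast
    have dB: "down le B = {x. le x b}" unfolding b down_def by simp
    have "is_edge (order_polytope le) (convex hull {rho (down le A), rho (down le B)})"
    proof (rule O_edge_pos[OF po down_ideal down_ideal])
      show "down le A \<subseteq> down le B" using True by (simp add: down_empty)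
      have "b \<in> down le B" unfolding dB using po_refl[OF po] by simp
      then show "down le A \<noteq> down le B" using True by (auto simp: down_empty)
      have "connected_in le ({b} \<union> down le B)"
      proof (rule connected_bip)
        show "down le B \<noteq> {}" using \<open>b \<in> down le B\<close> by blast
        show "{b} \<noteq> {}" by simp
        show "\<forall>u\<in>{b}. \<forall>v\<in>down le B. le u v \<or> le v u" unfolding dB by simp
      qed
      moreover have "{b} \<union> down le B = down le B - down le A"
        using True \<open>b \<in> down le B\<close> by (auto simp: down_empty)
      ultimately show "connected_in le (down le B - down le A)" by simp
    qed
    then show False using E unfolding E_star_C_def by blast
  qed
  show ?thesis using nR nL by blast
next
  case Ane: False
  then have Bne: "B \<noteq> {}" and wl: "\<forall>a\<in>A. \<forall>b\<in>B. rk le a \<le> rk le b" using wl by auto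
  obtain a0 b0 where a0: "a0 \<in> A" and b0: "b0 \<in> B" using Ane Bne by blast
  define kA where "kA = rk le a0"
  define kB where "kB = rk le b0"
  have rA: "\<forall>a\<in>A. rk le a = kA" unfolding kA_def using anti_rank[OF A _ a0] by blast
  have rB: "\<forall>b\<in>B. rk le b = kB" unfolding kB_def using anti_rank[OF B _ b0] by blast
  have kAB: "kA \<le> kB" unfolding kA_def kB_def using wl a0 b0 by blast
  have dA: "down le A = {x. rk le x < kA} \<union> A" using down_rank[OF Ane rA] .
  have dB: "down le B = {x. rk le x < kB} \<union> B" using down_rank[OF Bne rB] .
  have kBn: "kB \<le> n" using rk_le_n[OF po g] kB_def by simp
  show ?thesis
  proof (cases "kA = kB")
    case True
    have nR: "\<not> ?R"
    proof
      assume ?R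
      then obtain l where l: "1 \<le> l" "l \<le> n"
        "(A = rank_level le (l - 1) \<and> B \<subseteq> rank_level le l \<and> card B \<ge> 2) \<or>
         (B = rank_level le (l - 1) \<and> A \<subseteq> rank_level le l \<and> card A \<ge> 2)" by blast
      then have "(A = {x. rk le x = l - 1} \<and> B \<subseteq> {x. rk le x = l}) \<or> (B = {x. rk le x = l - 1} \<and> A \<subseteq> {x. rk le x = l})"
        unfolding RL by blast
      then have "(kA = l - 1 \<and> kB = l) \<or> (kB = l - 1 \<and> kA = l)"
      proof
        assume h: "A = {x. rk le x = l - 1} \<and> B \<subseteq> {x. rk le x = l}"
        have "rk le a0 = l - 1" using h a0 by blast
        moreover have "rk le b0 = l" using h b0 by blast
        ultimately show ?thesis unfolding kA_def kB_def by simp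
      next
        assume h: "B = {x. rk le x = l - 1} \<and> A \<subseteq> {x. rk le x = l}"
        have "rk le b0 = l - 1" using h b0 by blast
        moreover have "rk le a0 = l" using h a0 by blast
        ultimately show ?thesis unfolding kA_def kB_def by simp
      qed
      then show False using True l(1) by linarith
    qed
    have nL: "\<not> ?L"
    proof
      assume E: ?L
      have con: "connected_in le ((A - B) \<union> (B - A))"
        using E C_edge_iff[OF po A B ne] unfolding E_star_C_def by simp
      have an: "is_antichain le ((A - B) \<union> (B - A))"
      proof -
        have "(A - B) \<union> (B - A) \<subseteq> {x. rk le x = kA}" using rA rB True by auto
        then show ?thesis using level_anti[of kA] unfolding is_antichain_def by blast
      qed
      have "\<exists>z. (A - B) \<union> (B - A) = {z}" using connected_antichain[OF an] con by simp
      then obtain z where z: "(A - B) \<union> (B - A) = {z}" by blast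
      have zz: "\<And>x. x \<in> (A - B) \<union> (B - A) \<longleftrightarrow> x = z" using z by simp
      show False
      proof (cases "z \<in> B")
        case True
        have s1: "A \<subseteq> B"
        proof
          fix x assume "x \<in> A" then show "x \<in> B" using zz[of x] True by blast
        qed
        have s2: "B - A = {z}"
        proof (intro set_eqI iffI)
          fix x assume "x \<in> B - A" then show "x \<in> {z}" using zz[of x] by blast
        next
          fix x assume "x \<in> {z}" then show "x \<in> B - A" using zz[of z] True by blast
        qed
        have "is_edge (order_polytope le) (convex hull {rho (down le A), rho (down le B)})"
          using O_edge_same_level[OF A B s1 s2 Ane rB] .
        then show False using E unfolding E_star_C_def by blast
      next
        case False
        have s1: "B \<subseteq> A"
        proof
          fix x assume "x \<in> B" then show "x \<in> A" using zz[of x] False by blast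
        qed
        have s2: "A - B = {z}"
        proof (intro set_eqI iffI)
          fix x assume "x \<in> A - B" then show "x \<in> {z}" using zz[of x] by blast
        next
          fix x assume "x \<in> {z}" then show "x \<in> A - B" using zz[of z] False by blast
        qed
        have "is_edge (order_polytope le) (convex hull {rho (down le B), rho (down le A)})"
          using O_edge_same_level[OF B A s1 s2 Bne rA] .
        then show False using E unfolding E_star_C_def by (simp add: insert_commute)
      qed
    qed
    show ?thesis using nR nL by blast
  next
    case False
    then have lt: "kA < kB" using kAB by simp
    have AB: "A \<inter> B = {}"
    proof (rule ccontr)
      assume "A \<inter> B \<noteq> {}"
      then obtain x where "x \<in> A" "x \<in> B" by blast
      then have "rk le x = kA" "rk le x = kB" using rA rB by auto
      then show False using lt by simp
    qed
    have disj: "(A - B) \<union> (B - A) = A \<union> B" using AB by blast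
    have bpAB: "\<forall>u\<in>A. \<forall>v\<in>B. le u v \<or> le v u"
    proof (intro ballI)
      fix u v assume "u \<in> A" "v \<in> B"
      then have "rk le u < rk le v" using rA rB lt by simp
      then show "le u v \<or> le v u" using LE by blast
    qed
    have Cedge: "is_edge (chain_polytope le) (convex hull {rho A, rho B})"
      using C_edge_pos[OF po A B ne] connected_bip[OF Ane Bne bpAB] disj by simp
    define X where "X = {x. kA \<le> rk le x \<and> rk le x < kB \<and> x \<notin> A}"
    have diff: "down le B - down le A = X \<union> B" unfolding dA dB X_def using rA rB lt by auto
    have subd: "down le A \<subseteq> down le B" unfolding dA dB using rA lt by auto
    have ned: "down le A \<noteq> down le B" using diff b0 by blast
    have Oe: "is_edge (order_polytope le) (convex hull {rho (down le A), rho (down le B)})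
        \<longleftrightarrow> connected_in le (X \<union> B)"
    proof -
      have nsub: "\<not> down le B \<subseteq> down le A" using subd ned by blast
      show ?thesis using O_edge_iff[OF po down_ideal down_ideal ned] subd nsub diff by simp
    qed
    have L_iff: "?L \<longleftrightarrow> X = {} \<and> 2 \<le> card B"
    proof (cases "X = {}")
      case True
      then have "connected_in le (X \<union> B) \<longleftrightarrow> \<not> 2 \<le> card B" using anti_conn_card[OF B Bne] by simp
      then show ?thesis using Oe Cedge A B ne True unfolding E_star_C_def by blast
    next
      case False
      have bp: "\<forall>u\<in>X. \<forall>v\<in>B. le u v \<or> le v u"
      proof (intro ballI)
        fix u v assume "u \<in> X" "v \<in> B"
        then have "rk le u < rk le v" using rB unfolding X_def by simp
        then show "le u v \<or> le v u" using LE by blast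
      qed
      have "connected_in le (X \<union> B)" using connected_bip[OF False Bne bp] .
      then show ?thesis using Oe False unfolding E_star_C_def by blast
    qed
    have X_iff: "X = {} \<longleftrightarrow> A = {x. rk le x = kA} \<and> kB = kA + 1"
    proof
      assume X: "X = {}"
      have "{x. rk le x = kA} \<subseteq> A"
      proof
        fix x assume "x \<in> {x. rk le x = kA}"
        then show "x \<in> A" using X lt unfolding X_def by auto
      qed
      then have "A = {x. rk le x = kA}" using rA by auto
      moreover have "kB = kA + 1"
      proof (rule ccontr)
        assume "kB \<noteq> kA + 1"
        then have "kA + 1 < kB" using lt by simp
        then obtain x where x: "rk le x = kA + 1" using rk_surj[OF po g, of "kA + 1"] kBn by auto
        then have "x \<notin> A" using rA by auto
        then have "x \<in> X" using x \<open>kA + 1 < kB\<close> unfolding X_def by simp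
        then show False using X by simp
      qed
      ultimately show "A = {x. rk le x = kA} \<and> kB = kA + 1" by simp
    next
      assume a: "A = {x. rk le x = kA} \<and> kB = kA + 1"
      show "X = {}"
      proof (rule ccontr)
        assume "X \<noteq> {}"
        then obtain x where "x \<in> X" by blast
        then have "rk le x = kA" "x \<notin> A" using a unfolding X_def by auto
        then show False using a by simp
      qed
    qed
    have R_iff: "?R \<longleftrightarrow> A = {x. rk le x = kA} \<and> kB = kA + 1 \<and> 2 \<le> card B"
    proof
      assume ?R
      then obtain l where l: "1 \<le> l" "l \<le> n"
        "(A = rank_level le (l - 1) \<and> B \<subseteq> rank_level le l \<and> card B \<ge> 2) \<or>
         (B = rank_level le (l - 1) \<and> A \<subseteq> rank_level le l \<and> card A \<ge> 2)" by blast
      have "\<not> (B = rank_level le (l - 1) \<and> A \<subseteq> rank_level le l)"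
      proof
        assume "B = rank_level le (l - 1) \<and> A \<subseteq> rank_level le l"
        then have "kB = l - 1" "kA = l" using a0 b0 kA_def kB_def unfolding RL by auto
        then show False using lt by simp
      qed
      then have c: "A = {x. rk le x = l - 1}" "B \<subseteq> {x. rk le x = l}" "card B \<ge> 2"
        using l unfolding RL by auto
      then have "kA = l - 1" "kB = l" using a0 b0 kA_def kB_def by auto
      then show "A = {x. rk le x = kA} \<and> kB = kA + 1 \<and> 2 \<le> card B" using c l by auto
    next
      assume a: "A = {x. rk le x = kA} \<and> kB = kA + 1 \<and> 2 \<le> card B"
      have "B \<subseteq> rank_level le kB" unfolding RL using rB by auto
      then show ?R using a kBn unfolding RL
        by (intro exI[of _ kB]) auto
    qed
    show ?thesis using L_iff X_iff R_iff by blast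
  qed
qed


lemma E_star_O_sym: "E_star_O le I J \<longleftrightarrow> E_star_O le J I"
  unfolding E_star_O_def by (auto simp: insert_commute)

lemma E_star_C_sym: "E_star_C le A B \<longleftrightarrow> E_star_C le B A"
  unfolding E_star_C_def by (auto simp: insert_commute)

lemma partA:
  assumes I: "is_ideal le I" and J: "is_ideal le J" and ne: "I \<noteq> J"
  shows "E_star_O le I J \<longleftrightarrow>
              (I = {} \<and> connected_in le J \<and> card (maxs le J) \<ge> 2) \<or>
              (J = {} \<and> connected_in le I \<and> card (maxs le I) \<ge> 2)"
proof (cases "I \<subseteq> J")
  case True
  then have "J \<noteq> {}" using ne by blast
  then show ?thesis using aMain[OF I J True ne] by blast
next
  case F1: False
  show ?thesis
  proof (cases "J \<subseteq> I")
    case True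
    then have "I \<noteq> {}" using ne by blast
    then show ?thesis using aMain[OF J I True not_sym[OF ne]] E_star_O_sym by blast
  next
    case False
    have "\<not> E_star_O le I J" using O_not_edge_incomp[OF I J F1 False] unfolding E_star_O_def by blast
    moreover have "I \<noteq> {}" "J \<noteq> {}" using F1 False by blast+
    ultimately show ?thesis by blast
  qed
qed

lemma partB:
  assumes A: "is_antichain le A" and B: "is_antichain le B" and ne: "A \<noteq> B"
  shows "E_star_C le A B \<longleftrightarrow>
              (\<exists>l. 1 \<le> l \<and> l \<le> n \<and>
                 ((A = rank_level le (l - 1) \<and> B \<subseteq> rank_level le l \<and> card B \<ge> 2) \<or>
                  (B = rank_level le (l - 1) \<and> A \<subseteq> rank_level le l \<and> card A \<ge> 2)))"
proof -
  have swap: "E_star_C le A B \<longleftrightarrow>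
              (\<exists>l. 1 \<le> l \<and> l \<le> n \<and>
                 ((A = rank_level le (l - 1) \<and> B \<subseteq> rank_level le l \<and> card B \<ge> 2) \<or>
                  (B = rank_level le (l - 1) \<and> A \<subseteq> rank_level le l \<and> card A \<ge> 2)))"
    if h: "E_star_C le B A \<longleftrightarrow>
              (\<exists>l. 1 \<le> l \<and> l \<le> n \<and>
                 ((B = rank_level le (l - 1) \<and> A \<subseteq> rank_level le l \<and> card A \<ge> 2) \<or>
                  (A = rank_level le (l - 1) \<and> B \<subseteq> rank_level le l \<and> card B \<ge> 2)))"
    using h E_star_C_sym by blast
  show ?thesis
  proof (cases "A = {}")
    case True then show ?thesis using bMain[OF A B ne] by blast
  next
    case Ane: False
    show ?thesis
    proof (cases "B = {}")
      case True
      then show ?thesis using bMain[OF B A not_sym[OF ne]] swap by blast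
    next
      case Bne: False
      obtain a0 b0 where a0: "a0 \<in> A" and b0: "b0 \<in> B" using Ane Bne by blast
      show ?thesis
      proof (cases "rk le a0 \<le> rk le b0")
        case True
        have "\<forall>a\<in>A. \<forall>b\<in>B. rk le a \<le> rk le b"
          using True anti_rank[OF A _ a0] anti_rank[OF B _ b0] by simp
        then show ?thesis using bMain[OF A B ne] Ane Bne by blast
      next
        case False
        have "\<forall>b\<in>B. \<forall>a\<in>A. rk le b \<le> rk le a"
          using False anti_rank[OF A _ a0] anti_rank[OF B _ b0] by simp
        then show ?thesis using bMain[OF B A not_sym[OF ne]] Ane Bne swap by blast
      qed
    qed
  qed
qed

lemma main_ctx:
  shows "(\<forall>I J. is_ideal le I \<longrightarrow> is_ideal le J \<longrightarrow> I \<noteq> J \<longrightarrow>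
            (E_star_O le I J \<longleftrightarrow>
              (I = {} \<and> connected_in le J \<and> card (maxs le J) \<ge> 2) \<or>
              (J = {} \<and> connected_in le I \<and> card (maxs le I) \<ge> 2)))
       \<and> (\<forall>A B. is_antichain le A \<longrightarrow> is_antichain le B \<longrightarrow> A \<noteq> B \<longrightarrow>
            (E_star_C le A B \<longleftrightarrow>
              (\<exists>l. 1 \<le> l \<and> l \<le> n \<and>
                 ((A = rank_level le (l - 1) \<and> B \<subseteq> rank_level le l \<and> card B \<ge> 2) \<or>
                  (B = rank_level le (l - 1) \<and> A \<subseteq> rank_level le l \<and> card A \<ge> 2)))))"
  using partA partB by blast

end

theorem lemma3p1:
  fixes le :: "'n::finite \<Rightarrow> 'n \<Rightarrow> bool" and n :: nat
  assumes "poset_order le"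
    and "maximal_ranked le n"
  shows "(\<forall>I J. is_ideal le I \<longrightarrow> is_ideal le J \<longrightarrow> I \<noteq> J \<longrightarrow>
            (E_star_O le I J \<longleftrightarrow>
              (I = {} \<and> connected_in le J \<and> card (maxs le J) \<ge> 2) \<or>
              (J = {} \<and> connected_in le I \<and> card (maxs le I) \<ge> 2)))
       \<and> (\<forall>A B. is_antichain le A \<longrightarrow> is_antichain le B \<longrightarrow> A \<noteq> B \<longrightarrow>
            (E_star_C le A B \<longleftrightarrow>
              (\<exists>l. 1 \<le> l \<and> l \<le> n \<and>
                 ((A = rank_level le (l - 1) \<and> B \<subseteq> rank_level le l \<and> card B \<ge> 2) \<or>
                  (B = rank_level le (l - 1) \<and> A \<subseteq> rank_level le l \<and> card A \<ge> 2)))))"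
  using main_ctx[OF assms] .


end
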